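(* For every $\epsilon>0$ there is no algorithm (policy) for the DIME problem that guarantees an $n^{-1+\epsilon}$ approximation to $OPT_{full}$. Precisely: for every $\epsilon>0$ and every (possibly randomized) policy for DIME, there exist $n$, an uncertain network on $n$ nodes with parameters $T,K,L$, and a ground-truth network (a realization of the uncertain edges) such that the expected number of influenced nodes at the end of round $T$ obtained by executing the policy when the true network is the ground-truth network is strictly less than $n^{-1+\epsilon}\cdot OPT_{full}$, where $OPT_{full}$ is the maximum expected number of influenced nodes at the end of round $T$ achievable by a policy that knows the ground-truth network.
   Context: An uncertain network is a directed graph $G=(V,E)$ with $|V|=n$, whose edge set is the disjoint union of certain edges $E_c$ and uncertain edges $E_u$; each $e\in E_u$ has an existence probability $u(e)\in[0,1]$ (it exists independently with probability $u(e)$), and each $e\in E$ has a propagation probability $p(e)\in[0,1]$. A ground-truth network is the directed graph obtained by fixing, for each uncertain edge, whether it exists. Influence model: influenced nodes stay influenced forever; at each time step, every influenced node $x$ independently tries to influence each not-yet-influenced out-neighbour $y$ along an existing edge $(x,y)$, succeeding with probability $p(x,y)$; failed attempts are repeated in every subsequent time step. DIME problem: given the uncertain network and integers $T,K,L$, in each of $T$ rounds a policy chooses a set of exactly $K$ nodes, which become influenced with certainty; upon choosing them, the policy observes the true existence of all uncertain edges leaving the chosen nodes; then influence spreads for $L$ time steps according to the influence model (the policy does not observe which nodes get influenced by spread). A policy maps histories (the initial uncertain network, past choices and observations) to the next $K$-node choice. The objective is the expected total number of influenced nodes at the end of round $T$. *)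

theory Defs
  imports "HOL-Probability.Probability"
begin

(* Nodes of an n-node network are 0..<n.  Edges are pairs (x,y) = edge x -> y. *)
record unet =
  nnodes :: nat
  Ec :: "(nat \<times> nat) set"
  Eu :: "(nat \<times> nat) set"
  uprob :: "nat \<times> nat \<Rightarrow> real"       (* existence probability u(e) *)
  pprob :: "nat \<times> nat \<Rightarrow> real"       (* propagation probability p(e) *)

definition wf_unet :: "unet \<Rightarrow> bool" where
  "wf_unet G \<longleftrightarrow>
     Ec G \<union> Eu G \<subseteq> {0..<nnodes G} \<times> {0..<nnodes G} \<and>
     (\<forall>x. (x, x) \<notin> Ec G \<union> Eu G) \<and>
     Ec G \<inter> Eu G = {} \<and>
     (\<forall>e \<in> Eu G. 0 \<le> uprob G e \<and> uprob G e \<le> 1) \<and>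
     (\<forall>e \<in> Ec G \<union> Eu G. 0 \<le> pprob G e \<and> pprob G e \<le> 1)"

record dime_instance =
  net :: unet
  Tr :: nat
  Kn :: nat
  Ls :: nat

definition wf_instance :: "dime_instance \<Rightarrow> bool" where
  "wf_instance I \<longleftrightarrow> wf_unet (net I) \<and> 1 \<le> Tr I \<and> 1 \<le> Kn I \<and> Kn I \<le> nnodes (net I)"

(* A ground-truth network is given by the set R \<subseteq> Eu of uncertain edges that exist;
   we require it to be a realization of positive probability. *)
definition realization :: "unet \<Rightarrow> (nat \<times> nat) set \<Rightarrow> bool" where
  "realization G R \<longleftrightarrow> R \<subseteq> Eu G \<and>
     (\<forall>e \<in> R. uprob G e > 0) \<and> (\<forall>e \<in> Eu G - R. uprob G e < 1)"

definition spread_step :: "(nat \<times> nat) set \<Rightarrow> (nat \<times> nat \<Rightarrow> real) \<Rightarrow> nat set \<Rightarrow> nat set pmf" where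
  "spread_step E p S =
     map_pmf (\<lambda>c. S \<union> {y. \<exists>x \<in> S. c (x, y)})
       (Pi_pmf {(x, y). (x, y) \<in> E \<and> x \<in> S \<and> y \<notin> S} False (\<lambda>e. bernoulli_pmf (p e)))"

fun spread :: "(nat \<times> nat) set \<Rightarrow> (nat \<times> nat \<Rightarrow> real) \<Rightarrow> nat \<Rightarrow> nat set \<Rightarrow> nat set pmf" where
  "spread E p 0 S = return_pmf S"
| "spread E p (Suc l) S = bind_pmf (spread E p l S) (spread_step E p)"

(* History: list of (chosen set, observed set of existing uncertain edges leaving it). *)
type_synonym history = "(nat set \<times> (nat \<times> nat) set) list"

type_synonym policy = "history \<Rightarrow> nat set pmf"

type_synonym dime_policy = "dime_instance \<Rightarrow> policy"

definition valid_policy :: "dime_instance \<Rightarrow> policy \<Rightarrow> bool" where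
  "valid_policy I \<pi> \<longleftrightarrow>
     (\<forall>h. set_pmf (\<pi> h) \<subseteq> {A. A \<subseteq> {0..<nnodes (net I)} \<and> card A = Kn I})"

definition valid_dime_policy :: "dime_policy \<Rightarrow> bool" where
  "valid_dime_policy P \<longleftrightarrow> (\<forall>I. wf_instance I \<longrightarrow> valid_policy I (P I))"

definition dime_round :: "dime_instance \<Rightarrow> (nat \<times> nat) set \<Rightarrow> policy
                          \<Rightarrow> nat set \<times> history \<Rightarrow> (nat set \<times> history) pmf" where
  "dime_round I R \<pi> st =
     (case st of (S, h) \<Rightarrow>
       bind_pmf (\<pi> h) (\<lambda>A.
         map_pmf (\<lambda>S'. (S', h @ [(A, R \<inter> {e \<in> Eu (net I). fst e \<in> A})]))
           (spread (Ec (net I) \<union> R) (pprob (net I)) (Ls I) (S \<union> A))))"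

fun dime_run :: "dime_instance \<Rightarrow> (nat \<times> nat) set \<Rightarrow> policy \<Rightarrow> nat \<Rightarrow> (nat set \<times> history) pmf" where
  "dime_run I R \<pi> 0 = return_pmf ({}, [])"
| "dime_run I R \<pi> (Suc t) = bind_pmf (dime_run I R \<pi> t) (dime_round I R \<pi>)"

definition dime_value :: "dime_instance \<Rightarrow> (nat \<times> nat) set \<Rightarrow> policy \<Rightarrow> real" where
  "dime_value I R \<pi> = measure_pmf.expectation (dime_run I R \<pi> (Tr I)) (\<lambda>st. real (card (fst st)))"

(* OPT_full: best expected value of a policy that knows the ground truth R
   (the policy is chosen with R fixed, hence may depend on R). *)
definition OPT_full :: "dime_instance \<Rightarrow> (nat \<times> nat) set \<Rightarrow> real" where
  "OPT_full I R = (SUP \<pi> \<in> {\<pi>. valid_policy I \<pi>}. dime_value I R \<pi>)"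

end

theory Submission
  imports Defs
begin
lemma step_supp:
  assumes "finite E" "S' \<in> set_pmf (spread_step E p S)"
  shows "S \<subseteq> S' \<and> S' \<subseteq> S \<union> {y. \<exists>x\<in>S. (x,y) \<in> E}"
proof -
  let ?D = "{(x, y). (x, y) \<in> E \<and> x \<in> S \<and> y \<notin> S}"
  have fD: "finite ?D" by (rule finite_subset[OF _ assms(1)]) auto
  from assms(2) obtain c where c: "c \<in> set_pmf (Pi_pmf ?D False (\<lambda>e. bernoulli_pmf (p e)))"
    and S': "S' = S \<union> {y. \<exists>x \<in> S. c (x, y)}"
    unfolding spread_step_def set_map_pmf by blast
  have "\<forall>e. e \<notin> ?D \<longrightarrow> c e = False" using set_Pi_pmf_subset[OF fD, of False "\<lambda>e. bernoulli_pmf (p e)"] c by blast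
  then have "\<forall>x y. c (x,y) \<longrightarrow> (x,y) \<in> E" by blast
  then show ?thesis using S' by blast
qed

lemma bern1: "x \<in> set_pmf (bernoulli_pmf 1) \<Longrightarrow> x"
proof (rule ccontr)
  assume "x \<in> set_pmf (bernoulli_pmf 1)" "\<not> x"
  then have "pmf (bernoulli_pmf 1) False \<noteq> 0" by (simp add: set_pmf_iff)
  then show False by simp
qed

lemma step_supp1:
  assumes "finite E" "\<forall>e\<in>E. p e = 1" "S' \<in> set_pmf (spread_step E p S)"
  shows "S' = S \<union> {y. \<exists>x\<in>S. (x,y) \<in> E}"
proof -
  let ?D = "{(x, y). (x, y) \<in> E \<and> x \<in> S \<and> y \<notin> S}"
  have fD: "finite ?D" by (rule finite_subset[OF _ assms(1)]) auto
  from assms(3) obtain c where c: "c \<in> set_pmf (Pi_pmf ?D False (\<lambda>e. bernoulli_pmf (p e)))"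
    and S': "S' = S \<union> {y. \<exists>x \<in> S. c (x, y)}"
    unfolding spread_step_def set_map_pmf by blast
  have "c \<in> PiE_dflt ?D False (set_pmf \<circ> (\<lambda>e. bernoulli_pmf (p e)))"
    using set_Pi_pmf[OF fD, of False "\<lambda>e. bernoulli_pmf (p e)"] c by blast
  then have "\<forall>e. c e = (e \<in> ?D)" using assms(2)
    by (auto simp: PiE_dflt_def intro: bern1)
  then show ?thesis using S' by auto
qed

definition inst :: "nat \<Rightarrow> dime_instance" where
  "inst n = \<lparr>net = \<lparr>nnodes = n, Ec = {}, Eu = {(x,y). x<n \<and> y<n \<and> x\<noteq>y},
     uprob = (\<lambda>_. 1/2), pprob = (\<lambda>_. 1)\<rparr>, Tr = 1, Kn = 1, Ls = 1\<rparr>"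

definition RR :: "nat \<Rightarrow> nat \<Rightarrow> (nat \<times> nat) set" where
  "RR n v = {(x,y). x = v \<and> y<n \<and> y\<noteq>v}"

lemma run1_eq:
  "dime_run (inst n) R \<pi> (Tr (inst n)) = bind_pmf (\<pi> []) (\<lambda>A.
     map_pmf (\<lambda>S'. (S', [(A, R \<inter> {e \<in> Eu (net (inst n)). fst e \<in> A})]))
       (spread_step R (\<lambda>_. 1) A))"
  by (simp add: inst_def dime_round_def One_nat_def bind_return_pmf)

lemma run1_supp:
  assumes "st \<in> set_pmf (dime_run (inst n) R \<pi> (Tr (inst n)))"
  shows "\<exists>A\<in>set_pmf (\<pi> []). \<exists>S'. S' \<in> set_pmf (spread_step R (\<lambda>_. 1) A) \<and>
           st = (S', [(A, R \<inter> {e \<in> Eu (net (inst n)). fst e \<in> A})])"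
  using assms unfolding run1_eq by auto

lemma run1_map:
  "map_pmf (\<lambda>st. fst (hd (snd st))) (dime_run (inst n) R \<pi> (Tr (inst n))) = \<pi> []"
  unfolding run1_eq by (simp add: map_bind_pmf pmf.map_comp o_def bind_return_pmf')

lemma finRR: "finite (RR n v)"
  by (rule finite_subset[of _ "{0..<Suc v} \<times> {0..<n}"]) (auto simp: RR_def)

lemma run1_bound:
  assumes "valid_policy (inst n) \<pi>" "st \<in> set_pmf (dime_run (inst n) (RR n v) \<pi> (Tr (inst n)))"
  shows "fst st \<subseteq> {0..<n}"
proof -
  obtain A S' where A: "A \<in> set_pmf (\<pi> [])" and S': "S' \<in> set_pmf (spread_step (RR n v) (\<lambda>_. 1) A)"
    and st: "st = (S', [(A, RR n v \<inter> {e \<in> Eu (net (inst n)). fst e \<in> A})])"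
    using run1_supp[OF assms(2)] by blast
  have "A \<subseteq> {0..<n}" using assms(1) A by (auto simp: valid_policy_def inst_def)
  then show ?thesis using step_supp[OF finRR S'] st by (auto simp: RR_def)
qed


lemma integrable_run:
  assumes "valid_policy (inst n) \<pi>"
  shows "integrable (measure_pmf (dime_run (inst n) (RR n v) \<pi> (Tr (inst n)))) (\<lambda>st. real (card (fst st)))"
proof (rule measure_pmf.integrable_const_bound[where B="real n"])
  show "AE x in measure_pmf (dime_run (inst n) (RR n v) \<pi> (Tr (inst n))). norm (real (card (fst x))) \<le> real n"
  proof (rule AE_pmfI)
    fix st assume "st \<in> set_pmf (dime_run (inst n) (RR n v) \<pi> (Tr (inst n)))"
    then have "fst st \<subseteq> {0..<n}" using run1_bound[OF assms] by blast
    then have "card (fst st) \<le> n" using card_mono[of "{0..<n}" "fst st"] by simp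
    then show "norm (real (card (fst st))) \<le> real n" by simp
  qed
qed simp

lemma value_le_n:
  assumes "valid_policy (inst n) \<pi>"
  shows "dime_value (inst n) (RR n v) \<pi> \<le> real n"
proof -
  let ?M = "measure_pmf (dime_run (inst n) (RR n v) \<pi> (Tr (inst n)))"
  have "dime_value (inst n) (RR n v) \<pi> = integral\<^sup>L ?M (\<lambda>st. real (card (fst st)))"
    by (simp add: dime_value_def)
  also have "\<dots> \<le> integral\<^sup>L ?M (\<lambda>_. real n)"
  proof (rule integral_mono_AE[OF integrable_run[OF assms]])
    show "integrable ?M (\<lambda>_. real n)" by simp
    show "AE x in ?M. real (card (fst x)) \<le> real n"
    proof (rule AE_pmfI)
      fix st assume "st \<in> set_pmf (dime_run (inst n) (RR n v) \<pi> (Tr (inst n)))"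
      then have "fst st \<subseteq> {0..<n}" using run1_bound[OF assms] by blast
      then have "card (fst st) \<le> n" using card_mono[of "{0..<n}" "fst st"] by simp
      then show "real (card (fst st)) \<le> real n" by simp
    qed
  qed
  also have "\<dots> = real n" by simp
  finally show ?thesis .
qed

lemma opt_ge:
  assumes "v < n"
  shows "real n \<le> OPT_full (inst n) (RR n v)"
proof -
  define \<pi>0 :: policy where "\<pi>0 = (\<lambda>_. return_pmf {v})"
  have val: "valid_policy (inst n) \<pi>0" using assms by (simp add: valid_policy_def \<pi>0_def inst_def)
  let ?M = "measure_pmf (dime_run (inst n) (RR n v) \<pi>0 (Tr (inst n)))"
  have "dime_value (inst n) (RR n v) \<pi>0 = integral\<^sup>L ?M (\<lambda>st. real (card (fst st)))"
    by (simp add: dime_value_def)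
  also have "\<dots> = integral\<^sup>L ?M (\<lambda>_. real n)"
  proof (rule integral_cong_AE)
    show "AE x in ?M. real (card (fst x)) = real n"
    proof (rule AE_pmfI)
      fix st assume "st \<in> set_pmf (dime_run (inst n) (RR n v) \<pi>0 (Tr (inst n)))"
      then obtain A S' where A: "A \<in> set_pmf (\<pi>0 [])" and S': "S' \<in> set_pmf (spread_step (RR n v) (\<lambda>_. 1) A)"
        and st: "st = (S', [(A, RR n v \<inter> {e \<in> Eu (net (inst n)). fst e \<in> A})])"
        using run1_supp by blast
      have "A = {v}" using A by (simp add: \<pi>0_def)
      then have "S' = {v} \<union> {y. \<exists>x\<in>{v}. (x,y) \<in> RR n v}"
        using step_supp1[OF finRR _ S'] by simp
      also have "\<dots> = {0..<n}" using assms by (auto simp: RR_def)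
      finally show "real (card (fst st)) = real n" using st by simp
    qed
  qed simp_all
  also have "\<dots> = real n" by simp
  finally have eq: "dime_value (inst n) (RR n v) \<pi>0 = real n" .
  have bdd: "bdd_above ((\<lambda>\<pi>. dime_value (inst n) (RR n v) \<pi>) ` {\<pi>. valid_policy (inst n) \<pi>})"
    by (rule bdd_aboveI[where M="real n"]) (auto intro: value_le_n)
  show ?thesis unfolding OPT_full_def
    using cSUP_upper[OF _ bdd, of \<pi>0] val eq by simp
qed


lemma val_upper:
  assumes "valid_policy (inst n) \<pi>" "v < n"
  shows "dime_value (inst n) (RR n v) \<pi> \<le> 1 + real n * pmf (\<pi> []) {v}"
proof -
  let ?M = "measure_pmf (dime_run (inst n) (RR n v) \<pi> (Tr (inst n)))"
  let ?f = "\<lambda>st::nat set \<times> history. fst (hd (snd st))"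
  define g where "g = (\<lambda>A::nat set. 1 + real n * indicator {{v}} A)"
  have intg: "integrable (measure_pmf (\<pi> [])) g"
    unfolding g_def
    by (rule measure_pmf.integrable_const_bound[where B="1 + real n"]) (auto simp: indicator_def)
  have "dime_value (inst n) (RR n v) \<pi> = integral\<^sup>L ?M (\<lambda>st. real (card (fst st)))"
    by (simp add: dime_value_def)
  also have "\<dots> \<le> integral\<^sup>L ?M (\<lambda>st. g (?f st))"
  proof (rule integral_mono_AE[OF integrable_run[OF assms(1)]])
    have "integrable (measure_pmf (map_pmf ?f (dime_run (inst n) (RR n v) \<pi> (Tr (inst n))))) g"
      using intg by (simp only: run1_map)
    then show "integrable ?M (\<lambda>st. g (?f st))" by simp
    show "AE x in ?M. real (card (fst x)) \<le> g (?f x)"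
    proof (rule AE_pmfI)
      fix st assume st0: "st \<in> set_pmf (dime_run (inst n) (RR n v) \<pi> (Tr (inst n)))"
      then obtain A S' where A: "A \<in> set_pmf (\<pi> [])" and S': "S' \<in> set_pmf (spread_step (RR n v) (\<lambda>_. 1) A)"
        and st: "st = (S', [(A, RR n v \<inter> {e \<in> Eu (net (inst n)). fst e \<in> A})])"
        using run1_supp by blast
      have Asub: "A \<subseteq> {0..<n}" and cA: "card A = 1"
        using assms(1) A by (auto simp: valid_policy_def inst_def)
      obtain w where w: "A = {w}" using cA card_1_singletonE by blast
      have "fst st \<subseteq> {0..<n}" using run1_bound[OF assms(1) st0] .
      then have cn: "card (fst st) \<le> n" using card_mono[of "{0..<n}" "fst st"] by simp
      show "real (card (fst st)) \<le> g (?f st)"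
      proof (cases "w = v")
        case True
        then show ?thesis using cn st w by (simp add: g_def)
      next
        case False
        have "S' \<subseteq> {w} \<union> {y. \<exists>x\<in>{w}. (x,y) \<in> RR n v}"
          using step_supp[OF finRR S'] w by simp
        also have "\<dots> = {w}" using False by (auto simp: RR_def)
        finally have "card S' \<le> 1" using card_mono[of "{w}" S'] by simp
        then show ?thesis using st w False by (simp add: g_def)
      qed
    qed
  qed
  also have "\<dots> = integral\<^sup>L (measure_pmf (map_pmf ?f (dime_run (inst n) (RR n v) \<pi> (Tr (inst n))))) g"
    by simp
  also have "\<dots> = integral\<^sup>L (measure_pmf (\<pi> [])) g" by (simp only: run1_map)
  also have "\<dots> = 1 + real n * measure (measure_pmf (\<pi> [])) {{v}}"
  proof -
    have i1: "integrable (measure_pmf (\<pi> [])) (\<lambda>A. real n * indicator {{v}} A)"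
      by (rule measure_pmf.integrable_const_bound[where B="real n"]) (auto simp: indicator_def)
    have "integral\<^sup>L (measure_pmf (\<pi> [])) g = integral\<^sup>L (measure_pmf (\<pi> [])) (\<lambda>_. 1::real)
       + integral\<^sup>L (measure_pmf (\<pi> [])) (\<lambda>A. real n * indicator {{v}} A)"
      unfolding g_def by (rule Bochner_Integration.integral_add[OF _ i1]) simp
    also have "integral\<^sup>L (measure_pmf (\<pi> [])) (\<lambda>A. real n * indicator {{v}} A)
       = real n * integral\<^sup>L (measure_pmf (\<pi> [])) (indicator {{v}})"
      by (rule integral_mult_right_zero)
    also have "integral\<^sup>L (measure_pmf (\<pi> [])) (indicator {{v}} :: nat set \<Rightarrow> real) = measure (measure_pmf (\<pi> [])) {{v}}"
      by (simp add: Bochner_Integration.integral_indicator)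
    finally show ?thesis by simp
  qed
  also have "\<dots> = 1 + real n * pmf (\<pi> []) {v}" by (simp add: measure_pmf_single)
  finally show ?thesis .
qed

lemma pigeon:
  fixes M :: "nat set pmf"
  assumes "n > 0"
  shows "\<exists>v<n. pmf M {v} \<le> 1 / real n"
proof (rule ccontr)
  assume "\<not> ?thesis"
  then have h: "\<forall>v\<in>{0..<n}. 1 / real n < pmf M {v}" by auto
  have "(\<Sum>v\<in>{0..<n}. 1 / real n) < (\<Sum>v\<in>{0..<n}. pmf M {v})"
    using assms h by (intro sum_strict_mono) auto
  also have "\<dots> = sum (pmf M) ((\<lambda>v. {v}) ` {0..<n})"
    by (subst sum.reindex) (auto simp: inj_on_def)
  also have "\<dots> = measure (measure_pmf M) ((\<lambda>v. {v}) ` {0..<n})"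
    by (simp add: measure_measure_pmf_finite)
  also have "\<dots> \<le> 1" by simp
  finally show False using assms by simp
qed


theorem theorem1:
  fixes \<epsilon> :: real and P :: dime_policy
  assumes "\<epsilon> > 0" and "valid_dime_policy P"
  shows "\<exists>I R. wf_instance I \<and> realization (net I) R \<and>
           dime_value I R (P I) < real (nnodes (net I)) powr (\<epsilon> - 1) * OPT_full I R"
proof -
  define n where "n = nat \<lceil>3 powr (1/\<epsilon>)\<rceil> + 1"
  have n0: "n > 0" by (simp add: n_def)
  have wf: "wf_instance (inst n)"
    using n0 by (auto simp: wf_instance_def wf_unet_def inst_def)
  have valid: "valid_policy (inst n) (P (inst n))"
    using assms(2) wf by (simp add: valid_dime_policy_def)
  obtain v where v: "v < n" and pv: "pmf (P (inst n) []) {v} \<le> 1 / real n"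
    using pigeon[OF n0] by blast
  have real_n: "3 powr (1/\<epsilon>) \<le> real n"
    unfolding n_def by linarith
  have "3 = (3 powr (1/\<epsilon>)) powr \<epsilon>"
    using assms(1) by (simp add: powr_powr)
  also have "\<dots> \<le> real n powr \<epsilon>"
    using real_n assms(1) by (intro powr_mono2) auto
  finally have n3: "3 \<le> real n powr \<epsilon>" .
  have "dime_value (inst n) (RR n v) (P (inst n)) \<le> 1 + real n * pmf (P (inst n) []) {v}"
    by (rule val_upper[OF valid v])
  also have "\<dots> \<le> 1 + real n * (1 / real n)"
    using pv by (intro add_left_mono mult_left_mono) auto
  also have "\<dots> = 2" using n0 by simp
  also have "\<dots> < real n powr \<epsilon>" using n3 by simp
  also have "\<dots> = real n powr (\<epsilon> - 1) * real n"
    using n0 by (simp add: powr_diff)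
  also have "\<dots> \<le> real n powr (\<epsilon> - 1) * OPT_full (inst n) (RR n v)"
    using opt_ge[OF v] by (intro mult_left_mono) auto
  finally have lt: "dime_value (inst n) (RR n v) (P (inst n)) < real n powr (\<epsilon> - 1) * OPT_full (inst n) (RR n v)" .
  have re: "realization (net (inst n)) (RR n v)"
    using v by (auto simp: realization_def inst_def RR_def)
  have nn: "nnodes (net (inst n)) = n" by (simp add: inst_def)
  show ?thesis using wf re lt nn by metis
qed

end
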